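(* Let $G$ be a two-player stage game with $|V_1^{p,p}|>1$ and $|V_2^{p,p}|>1$. If $G\in\mathcal{G}_{LS}^{m,p}$, then $G\in\mathcal{G}_{LS}^{p,p}$.
   Context: A two-player stage game $G$ has finite nonempty action sets $A_1,A_2$ and payoffs $u_1,u_2:A_1\times A_2\to\mathbb{R}$, extended to mixed strategies by expectation. $G(T)$ is the $T$-round repetition with realized actions observed each round and payoffs the expected sum of stage payoffs; an SPE of $G(T)$ is a strategy profile whose continuation after every history of length $k<T$ is a Nash equilibrium of $G(T-k)$. Regimes: pure-pure ($p,p$): both players restricted to actions (in the stage game and in every round, including deviations); mixed-pure ($m,p$): player 1 may mix, player 2 uses only actions; mixed-mixed ($m,m$): both may mix. For regime $r$, $\mathrm{Nash}^r(G)$ is the set of stage-game profiles available in $r$ from which no player can profitably deviate unilaterally to a strategy available in $r$, and $V_i^r=\{u_i(\sigma):\sigma\in\mathrm{Nash}^r(G)\}$. Locally suboptimal behavior occurs in an SPE $\mu$ of $G(T)$ (regime $r$) if for some history $h$ of length $k<T$, $(\mu_1(h),\mu_2(h))\notin\mathrm{Nash}^r(G)$. $\mathcal{G}_{LS}^r$ is the set of stage games $G$ for which there exist $T\ge1$ and an SPE of $G(T)$ in regime $r$ in which locally suboptimal behavior occurs. *)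

theory Defs
  imports "HOL-Probability.Probability"
begin

record ('a, 'b) stage_game =
  A1 :: "'a set"
  A2 :: "'b set"
  u1 :: "'a \<Rightarrow> 'b \<Rightarrow> real"
  u2 :: "'a \<Rightarrow> 'b \<Rightarrow> real"

definition wf_game :: "('a, 'b) stage_game \<Rightarrow> bool" where
  "wf_game G \<longleftrightarrow> finite (A1 G) \<and> A1 G \<noteq> {} \<and> finite (A2 G) \<and> A2 G \<noteq> {}"

text \<open>Regimes: pure-pure, mixed-pure, mixed-mixed.\<close>
datatype regime = PP | MP | MM

text \<open>Stage strategies available to each player in a regime (pure actions are Dirac pmfs).\<close>
definition avail1 :: "regime \<Rightarrow> ('a, 'b) stage_game \<Rightarrow> 'a pmf set" where
  "avail1 r G = (if r = PP then return_pmf ` A1 G else {p. set_pmf p \<subseteq> A1 G})"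

definition avail2 :: "regime \<Rightarrow> ('a, 'b) stage_game \<Rightarrow> 'b pmf set" where
  "avail2 r G = (if r = MM then {q. set_pmf q \<subseteq> A2 G} else return_pmf ` A2 G)"

definition expect2 :: "'a pmf \<Rightarrow> 'b pmf \<Rightarrow> ('a \<Rightarrow> 'b \<Rightarrow> real) \<Rightarrow> real" where
  "expect2 p q f = measure_pmf.expectation p (\<lambda>a. measure_pmf.expectation q (\<lambda>b. f a b))"

definition Nash :: "regime \<Rightarrow> ('a, 'b) stage_game \<Rightarrow> ('a pmf \<times> 'b pmf) set" where
  "Nash r G = {(p, q). p \<in> avail1 r G \<and> q \<in> avail2 r G
      \<and> (\<forall>p' \<in> avail1 r G. expect2 p' q (u1 G) \<le> expect2 p q (u1 G))
      \<and> (\<forall>q' \<in> avail2 r G. expect2 p q' (u2 G) \<le> expect2 p q (u2 G))}"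

definition V1 :: "regime \<Rightarrow> ('a, 'b) stage_game \<Rightarrow> real set" where
  "V1 r G = (\<lambda>(p, q). expect2 p q (u1 G)) ` Nash r G"

definition V2 :: "regime \<Rightarrow> ('a, 'b) stage_game \<Rightarrow> real set" where
  "V2 r G = (\<lambda>(p, q). expect2 p q (u2 G)) ` Nash r G"

text \<open>Histories: chronological lists of realized action profiles.\<close>
type_synonym ('a, 'b) hist = "('a \<times> 'b) list"

definition valid_hist :: "('a, 'b) stage_game \<Rightarrow> ('a, 'b) hist \<Rightarrow> bool" where
  "valid_hist G h \<longleftrightarrow> set h \<subseteq> A1 G \<times> A2 G"

fun cont_val :: "('a \<Rightarrow> 'b \<Rightarrow> real) \<Rightarrow> nat \<Rightarrow> (('a, 'b) hist \<Rightarrow> 'a pmf)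
    \<Rightarrow> (('a, 'b) hist \<Rightarrow> 'b pmf) \<Rightarrow> ('a, 'b) hist \<Rightarrow> real" where
  "cont_val u 0 s1 s2 h = 0"
| "cont_val u (Suc n) s1 s2 h =
     expect2 (s1 h) (s2 h) (\<lambda>a b. u a b + cont_val u n s1 s2 (h @ [(a, b)]))"

definition strat1 :: "regime \<Rightarrow> ('a, 'b) stage_game \<Rightarrow> (('a, 'b) hist \<Rightarrow> 'a pmf) \<Rightarrow> bool" where
  "strat1 r G s \<longleftrightarrow> (\<forall>h. valid_hist G h \<longrightarrow> s h \<in> avail1 r G)"

definition strat2 :: "regime \<Rightarrow> ('a, 'b) stage_game \<Rightarrow> (('a, 'b) hist \<Rightarrow> 'b pmf) \<Rightarrow> bool" where
  "strat2 r G s \<longleftrightarrow> (\<forall>h. valid_hist G h \<longrightarrow> s h \<in> avail2 r G)"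

definition SPE :: "('a, 'b) stage_game \<Rightarrow> nat \<Rightarrow> regime
    \<Rightarrow> (('a, 'b) hist \<Rightarrow> 'a pmf) \<Rightarrow> (('a, 'b) hist \<Rightarrow> 'b pmf) \<Rightarrow> bool" where
  "SPE G T r s1 s2 \<longleftrightarrow> strat1 r G s1 \<and> strat2 r G s2 \<and>
     (\<forall>h. valid_hist G h \<and> length h < T \<longrightarrow>
        (\<forall>d1. strat1 r G d1 \<longrightarrow>
            cont_val (u1 G) (T - length h) d1 s2 h \<le> cont_val (u1 G) (T - length h) s1 s2 h) \<and>
        (\<forall>d2. strat2 r G d2 \<longrightarrow>
            cont_val (u2 G) (T - length h) s1 d2 h \<le> cont_val (u2 G) (T - length h) s1 s2 h))"

definition locally_suboptimal :: "('a, 'b) stage_game \<Rightarrow> nat \<Rightarrow> regime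
    \<Rightarrow> (('a, 'b) hist \<Rightarrow> 'a pmf) \<Rightarrow> (('a, 'b) hist \<Rightarrow> 'b pmf) \<Rightarrow> bool" where
  "locally_suboptimal G T r s1 s2 \<longleftrightarrow>
     (\<exists>h. valid_hist G h \<and> length h < T \<and> (s1 h, s2 h) \<notin> Nash r G)"

definition in_G_LS :: "regime \<Rightarrow> ('a, 'b) stage_game \<Rightarrow> bool" where
  "in_G_LS r G \<longleftrightarrow> (\<exists>T \<ge> 1. \<exists>s1 s2. SPE G T r s1 s2 \<and> locally_suboptimal G T r s1 s2)"

end

theory Submission imports Defs begin

definition pnash :: "('a, 'b) stage_game \<Rightarrow> 'a \<Rightarrow> 'b \<Rightarrow> bool" where
  "pnash G a b \<longleftrightarrow> a \<in> A1 G \<and> b \<in> A2 G \<and> (\<forall>a'\<in>A1 G. u1 G a' b \<le> u1 G a b)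
     \<and> (\<forall>b'\<in>A2 G. u2 G a b' \<le> u2 G a b)"

lemma expect2_ret[simp]: "expect2 (return_pmf a) (return_pmf b) f = f a b"
  by (simp add: expect2_def)

lemma Nash_PP_ret: "(return_pmf a, return_pmf b) \<in> Nash PP G \<longleftrightarrow> pnash G a b"
  unfolding Nash_def pnash_def avail1_def avail2_def by auto

lemma Nash_PP_form: "x \<in> Nash PP G \<Longrightarrow> \<exists>a b. x = (return_pmf a, return_pmf b) \<and> pnash G a b"
  unfolding Nash_def pnash_def avail1_def avail2_def by auto

lemma cv_path:
  assumes "\<And>h. h \<noteq> [] \<Longrightarrow> \<sigma> h = \<phi> (hd h) (length h)"
  shows "h \<noteq> [] \<Longrightarrow> cont_val u n (\<lambda>h. return_pmf (fst (\<sigma> h))) (\<lambda>h. return_pmf (snd (\<sigma> h))) h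
     = (\<Sum>j<n. u (fst (\<phi> (hd h) (length h + j))) (snd (\<phi> (hd h) (length h + j))))"
proof (induction n arbitrary: h)
  case 0 then show ?case by simp
next
  case (Suc n)
  have e: "hd (h @ [x]) = hd h" "length (h @ [x]) = Suc (length h)" for x
    using Suc.prems by auto
  show ?case using Suc.prems
    by (simp del: sum.lessThan_Suc add: assms Suc.IH e sum.lessThan_Suc_shift)
qed

lemma cv_dev1:
  assumes "\<And>h. h \<noteq> [] \<Longrightarrow> \<sigma> h = \<phi> (hd h) (length h)"
    and "\<And>e k. pnash G (fst (\<phi> e k)) (snd (\<phi> e k))"
    and "strat1 PP G d1"
  shows "h \<noteq> [] \<Longrightarrow> valid_hist G h \<Longrightarrow> cont_val (u1 G) n d1 (\<lambda>h. return_pmf (snd (\<sigma> h))) h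
     \<le> (\<Sum>j<n. u1 G (fst (\<phi> (hd h) (length h + j))) (snd (\<phi> (hd h) (length h + j))))"
proof (induction n arbitrary: h)
  case 0 then show ?case by simp
next
  case (Suc n)
  obtain a where a: "d1 h = return_pmf a" "a \<in> A1 G"
    using assms(3) Suc.prems unfolding strat1_def avail1_def by auto
  define y where "y = snd (\<phi> (hd h) (length h))"
  define x where "x = fst (\<phi> (hd h) (length h))"
  have pn: "pnash G x y" using assms(2) unfolding x_def y_def by simp
  hence y: "y \<in> A2 G" and le: "u1 G a y \<le> u1 G x y" using a unfolding pnash_def by auto
  have v: "valid_hist G (h @ [(a, y)])" using Suc.prems y a unfolding valid_hist_def by auto
  have IH: "cont_val (u1 G) n d1 (\<lambda>h. return_pmf (snd (\<sigma> h))) (h @ [(a, y)])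
     \<le> (\<Sum>j<n. u1 G (fst (\<phi> (hd h) (Suc (length h) + j))) (snd (\<phi> (hd h) (Suc (length h) + j))))"
    using Suc.IH[OF _ v] Suc.prems by simp
  have "cont_val (u1 G) (Suc n) d1 (\<lambda>h. return_pmf (snd (\<sigma> h))) h
     = u1 G a y + cont_val (u1 G) n d1 (\<lambda>h. return_pmf (snd (\<sigma> h))) (h @ [(a, y)])"
    using Suc.prems a by (simp add: assms(1) y_def)
  also have "\<dots> \<le> u1 G x y + (\<Sum>j<n. u1 G (fst (\<phi> (hd h) (Suc (length h) + j))) (snd (\<phi> (hd h) (Suc (length h) + j))))"
    using le IH by linarith
  also have "\<dots> = (\<Sum>j<Suc n. u1 G (fst (\<phi> (hd h) (length h + j))) (snd (\<phi> (hd h) (length h + j))))"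
    by (simp del: sum.lessThan_Suc add: sum.lessThan_Suc_shift x_def y_def)
  finally show ?case .
qed

lemma cv_dev2:
  assumes "\<And>h. h \<noteq> [] \<Longrightarrow> \<sigma> h = \<phi> (hd h) (length h)"
    and "\<And>e k. pnash G (fst (\<phi> e k)) (snd (\<phi> e k))"
    and "strat2 PP G d2"
  shows "h \<noteq> [] \<Longrightarrow> valid_hist G h \<Longrightarrow> cont_val (u2 G) n (\<lambda>h. return_pmf (fst (\<sigma> h))) d2 h
     \<le> (\<Sum>j<n. u2 G (fst (\<phi> (hd h) (length h + j))) (snd (\<phi> (hd h) (length h + j))))"
proof (induction n arbitrary: h)
  case 0 then show ?case by simp
next
  case (Suc n)
  obtain b where b: "d2 h = return_pmf b" "b \<in> A2 G"
    using assms(3) Suc.prems unfolding strat2_def avail2_def by auto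
  define y where "y = snd (\<phi> (hd h) (length h))"
  define x where "x = fst (\<phi> (hd h) (length h))"
  have pn: "pnash G x y" using assms(2) unfolding x_def y_def by simp
  hence x: "x \<in> A1 G" and le: "u2 G x b \<le> u2 G x y" using b unfolding pnash_def by auto
  have v: "valid_hist G (h @ [(x, b)])" using Suc.prems x b unfolding valid_hist_def by auto
  have IH: "cont_val (u2 G) n (\<lambda>h. return_pmf (fst (\<sigma> h))) d2 (h @ [(x, b)])
     \<le> (\<Sum>j<n. u2 G (fst (\<phi> (hd h) (Suc (length h) + j))) (snd (\<phi> (hd h) (Suc (length h) + j))))"
    using Suc.IH[OF _ v] Suc.prems by simp
  have "cont_val (u2 G) (Suc n) (\<lambda>h. return_pmf (fst (\<sigma> h))) d2 h
     = u2 G x b + cont_val (u2 G) n (\<lambda>h. return_pmf (fst (\<sigma> h))) d2 (h @ [(x, b)])"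
    using Suc.prems b by (simp add: assms(1) x_def)
  also have "\<dots> \<le> u2 G x y + (\<Sum>j<n. u2 G (fst (\<phi> (hd h) (Suc (length h) + j))) (snd (\<phi> (hd h) (Suc (length h) + j))))"
    using le IH by linarith
  also have "\<dots> = (\<Sum>j<Suc n. u2 G (fst (\<phi> (hd h) (length h + j))) (snd (\<phi> (hd h) (length h + j))))"
    by (simp del: sum.lessThan_Suc add: sum.lessThan_Suc_shift x_def y_def)
  finally show ?case .
qed

lemma sum_if_half: "(\<Sum>j<2*m. (if j < m then (d::real) else 0)) = real m * d"
proof -
  have "{..<2*m} \<inter> {j. j < m} = {..<m}" by auto
  thus ?thesis by (simp add: sum.If_cases)
qed
lemma two_elems: "card (S::'c set) > 1 \<Longrightarrow> \<exists>x\<in>S. \<exists>y\<in>S. x \<noteq> y"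
proof (rule ccontr)
  assume c: "card S > 1" and n: "\<not> (\<exists>x\<in>S. \<exists>y\<in>S. x \<noteq> y)"
  hence f: "finite S" "S \<noteq> {}" using card_gt_0_iff by fastforce+
  then obtain x where "x \<in> S" by auto
  hence "S \<subseteq> {x}" using n by auto
  hence "card S \<le> 1" using card_mono[of "{x}" S] by auto
  thus False using c by simp
qed
lemma exp_const: "set_pmf p \<subseteq> S \<Longrightarrow> (\<forall>x\<in>S. f x = (c::real)) \<Longrightarrow> measure_pmf.expectation p f = c"
proof -
  assume a: "set_pmf p \<subseteq> S" "\<forall>x\<in>S. f x = c"
  have "measure_pmf.expectation p f = measure_pmf.expectation p (\<lambda>_. c)"
    by (rule integral_cong_AE) (use a in \<open>auto simp: AE_measure_pmf_iff\<close>)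
  thus ?thesis by simp
qed
lemma no_LS_MP:
  assumes wf: "wf_game G" and all: "\<forall>a\<in>A1 G. \<forall>b\<in>A2 G. pnash G a b"
  shows "\<not> in_G_LS MP G"
proof
  assume "in_G_LS MP G"
  then obtain T s1 s2 where spe: "SPE G T MP s1 s2" and ls: "locally_suboptimal G T MP s1 s2"
    unfolding in_G_LS_def by auto
  obtain h where h: "valid_hist G h" "(s1 h, s2 h) \<notin> Nash MP G"
    using ls unfolding locally_suboptimal_def by auto
  have p: "set_pmf (s1 h) \<subseteq> A1 G" using spe h(1) unfolding SPE_def strat1_def avail1_def by auto
  obtain b where b: "s2 h = return_pmf b" "b \<in> A2 G"
    using spe h(1) unfolding SPE_def strat2_def avail2_def by auto
  obtain a0 where a0: "a0 \<in> A1 G" using wf unfolding wf_game_def by auto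
  have u1c: "u1 G a b' = u1 G a0 b'" if "a \<in> A1 G" "b' \<in> A2 G" for a b'
    using all that a0 unfolding pnash_def by (meson order_antisym)
  have u2c: "u2 G a b' = u2 G a b" if "a \<in> A1 G" "b' \<in> A2 G" for a b'
    using all that b(2) unfolding pnash_def by (meson order_antisym)
  have e1: "expect2 p' (return_pmf b) (u1 G) = u1 G a0 b" if "set_pmf p' \<subseteq> A1 G" for p'
    unfolding expect2_def using that u1c b(2) by (simp add: exp_const)
  have d1: "\<forall>p'\<in>{p. set_pmf p \<subseteq> A1 G}. expect2 p' (return_pmf b) (u1 G) \<le> expect2 (s1 h) (return_pmf b) (u1 G)"
    using e1 p by simp
  have d2: "\<forall>q'\<in>return_pmf ` A2 G. expect2 (s1 h) q' (u2 G) \<le> expect2 (s1 h) (return_pmf b) (u2 G)"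
  proof
    fix q' assume "q' \<in> return_pmf ` A2 G"
    then obtain b' where b': "q' = return_pmf b'" "b' \<in> A2 G" by auto
    have "expect2 (s1 h) q' (u2 G) = expect2 (s1 h) (return_pmf b) (u2 G)"
      unfolding expect2_def b'(1) using u2c b'(2) p
      by (simp, intro integral_cong_AE) (auto simp: AE_measure_pmf_iff)
    thus "expect2 (s1 h) q' (u2 G) \<le> expect2 (s1 h) (return_pmf b) (u2 G)" by simp
  qed
  have "(s1 h, s2 h) \<in> Nash MP G"
    unfolding Nash_def avail1_def avail2_def using d1 d2 p b by auto
  thus False using h(2) by simp
qed

theorem mainTheorem10:
  fixes G :: "('a, 'b) stage_game"
  assumes "wf_game G"
    and "card (V1 PP G) > 1"
    and "card (V2 PP G) > 1"
    and "in_G_LS MP G"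
  shows "in_G_LS PP G"
proof (cases "\<forall>a\<in>A1 G. \<forall>b\<in>A2 G. pnash G a b")
  case True
  thus ?thesis using no_LS_MP assms(1,4) by blast
next
  case False
  then obtain a0 b0 where ab0: "a0 \<in> A1 G" "b0 \<in> A2 G" "\<not> pnash G a0 b0" by auto
  define NP where "NP = {x. pnash G (fst x) (snd x)}"
  define U1 where "U1 = (\<lambda>x::'a\<times>'b. u1 G (fst x) (snd x))"
  define U2 where "U2 = (\<lambda>x::'a\<times>'b. u2 G (fst x) (snd x))"
  have NPsub: "NP \<subseteq> A1 G \<times> A2 G" unfolding NP_def pnash_def by auto
  have finNP: "finite NP" using assms(1) NPsub finite_subset unfolding wf_game_def by blast
  have V1: "V1 PP G = U1 ` NP"
  proof
    show "V1 PP G \<subseteq> U1 ` NP" unfolding V1_def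
    proof
      fix v assume "v \<in> (\<lambda>(p, q). expect2 p q (u1 G)) ` Nash PP G"
      then obtain x where x: "x \<in> Nash PP G" "v = (\<lambda>(p, q). expect2 p q (u1 G)) x" by auto
      then obtain a b where "x = (return_pmf a, return_pmf b)" "pnash G a b" using Nash_PP_form by blast
      thus "v \<in> U1 ` NP" using x unfolding U1_def NP_def by (intro image_eqI[of _ _ "(a,b)"]) auto
    qed
    show "U1 ` NP \<subseteq> V1 PP G" unfolding V1_def U1_def NP_def
    proof
      fix v assume "v \<in> (\<lambda>x. u1 G (fst x) (snd x)) ` {x. pnash G (fst x) (snd x)}"
      then obtain a b where "pnash G a b" "v = u1 G a b" by auto
      thus "v \<in> (\<lambda>(p, q). expect2 p q (u1 G)) ` Nash PP G"
        using Nash_PP_ret by (metis (no_types, lifting) case_prod_conv expect2_ret image_eqI)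
    qed
  qed
  have V2: "V2 PP G = U2 ` NP"
  proof
    show "V2 PP G \<subseteq> U2 ` NP" unfolding V2_def
    proof
      fix v assume "v \<in> (\<lambda>(p, q). expect2 p q (u2 G)) ` Nash PP G"
      then obtain x where x: "x \<in> Nash PP G" "v = (\<lambda>(p, q). expect2 p q (u2 G)) x" by auto
      then obtain a b where "x = (return_pmf a, return_pmf b)" "pnash G a b" using Nash_PP_form by blast
      thus "v \<in> U2 ` NP" using x unfolding U2_def NP_def by (intro image_eqI[of _ _ "(a,b)"]) auto
    qed
    show "U2 ` NP \<subseteq> V2 PP G" unfolding V2_def U2_def NP_def
    proof
      fix v assume "v \<in> (\<lambda>x. u2 G (fst x) (snd x)) ` {x. pnash G (fst x) (snd x)}"
      then obtain a b where "pnash G a b" "v = u2 G a b" by auto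
      thus "v \<in> (\<lambda>(p, q). expect2 p q (u2 G)) ` Nash PP G"
        using Nash_PP_ret by (metis (no_types, lifting) case_prod_conv expect2_ret image_eqI)
    qed
  qed
  obtain P Q where PQ: "P \<in> NP" "Q \<in> NP" "U1 P \<noteq> U1 Q"
    using two_elems[OF assms(2)] V1 by auto
  obtain P' Q' where PQ': "P' \<in> NP" "Q' \<in> NP" "U2 P' \<noteq> U2 Q'"
    using two_elems[OF assms(3)] V2 by auto
  have ne: "NP \<noteq> {}" using PQ by auto
  obtain L1 where L1: "L1 \<in> NP" "U1 L1 = Min (U1 ` NP)"
  proof -
    have "Min (U1 ` NP) \<in> U1 ` NP" using finNP ne by (intro Min_in) auto
    thus ?thesis using that by (auto simp: image_iff)
  qed
  obtain H1 where H1: "H1 \<in> NP" "U1 H1 = Max (U1 ` NP)"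
  proof -
    have "Max (U1 ` NP) \<in> U1 ` NP" using finNP ne by (intro Max_in) auto
    thus ?thesis using that by (auto simp: image_iff)
  qed
  obtain L2 where L2: "L2 \<in> NP" "U2 L2 = Min (U2 ` NP)"
  proof -
    have "Min (U2 ` NP) \<in> U2 ` NP" using finNP ne by (intro Min_in) auto
    thus ?thesis using that by (auto simp: image_iff)
  qed
  obtain H2 where H2: "H2 \<in> NP" "U2 H2 = Max (U2 ` NP)"
  proof -
    have "Max (U2 ` NP) \<in> U2 ` NP" using finNP ne by (intro Max_in) auto
    thus ?thesis using that by (auto simp: image_iff)
  qed
  have minL1: "U1 L1 \<le> U1 x" if "x \<in> NP" for x using L1 finNP that by simp
  have maxH1: "U1 x \<le> U1 H1" if "x \<in> NP" for x using H1 finNP that by simp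
  have minL2: "U2 L2 \<le> U2 x" if "x \<in> NP" for x using L2 finNP that by simp
  have maxH2: "U2 x \<le> U2 H2" if "x \<in> NP" for x using H2 finNP that by simp
  define \<delta>1 where "\<delta>1 = U1 H1 - U1 L1"
  define \<delta>2 where "\<delta>2 = U2 H2 - U2 L2"
  have d1pos: "\<delta>1 > 0" unfolding \<delta>1_def
    using minL1[OF PQ(1)] minL1[OF PQ(2)] maxH1[OF PQ(1)] maxH1[OF PQ(2)] PQ(3) by linarith
  have d2pos: "\<delta>2 > 0" unfolding \<delta>2_def
    using minL2[OF PQ'(1)] minL2[OF PQ'(2)] maxH2[OF PQ'(1)] maxH2[OF PQ'(2)] PQ'(3) by linarith
  define D1 where "D1 = (\<Sum>a\<in>A1 G. \<bar>u1 G a b0 - u1 G a0 b0\<bar>)"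
  define D2 where "D2 = (\<Sum>b\<in>A2 G. \<bar>u2 G a0 b - u2 G a0 b0\<bar>)"
  have D1b: "u1 G a b0 - u1 G a0 b0 \<le> D1" if "a \<in> A1 G" for a
  proof -
    have "\<bar>u1 G a b0 - u1 G a0 b0\<bar> \<le> D1" unfolding D1_def
      using assms(1) that by (intro member_le_sum) (auto simp: wf_game_def)
    thus ?thesis by linarith
  qed
  have D2b: "u2 G a0 b - u2 G a0 b0 \<le> D2" if "b \<in> A2 G" for b
  proof -
    have "\<bar>u2 G a0 b - u2 G a0 b0\<bar> \<le> D2" unfolding D2_def
      using assms(1) that by (intro member_le_sum) (auto simp: wf_game_def)
    thus ?thesis by linarith
  qed
  obtain m :: nat where m: "max (D1 / \<delta>1) (D2 / \<delta>2) < real m"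
    using reals_Archimedean2 by blast
  have m1: "D1 < real m * \<delta>1" using m d1pos by (simp add: pos_divide_less_eq)
  have m2: "D2 < real m * \<delta>2" using m d2pos by (simp add: pos_divide_less_eq)
  define \<phi> where "\<phi> = (\<lambda>(e::'a\<times>'b) (k::nat). if fst e \<noteq> a0 \<and> snd e = b0 then L1
      else if fst e = a0 \<and> snd e \<noteq> b0 then L2 else if k \<le> m then H1 else H2)"
  define \<sigma> where "\<sigma> = (\<lambda>h::('a\<times>'b) list. if h = [] then (a0, b0) else \<phi> (hd h) (length h))"
  define s1 where "s1 = (\<lambda>h. return_pmf (fst (\<sigma> h)))"
  define s2 where "s2 = (\<lambda>h. return_pmf (snd (\<sigma> h)))"
  define T where "T = Suc (2 * m)"
  have \<sigma>\<phi>: "\<And>h. h \<noteq> [] \<Longrightarrow> \<sigma> h = \<phi> (hd h) (length h)" unfolding \<sigma>_def by simp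
  have \<phi>N: "\<phi> e k \<in> NP" for e k unfolding \<phi>_def using L1 L2 H1 H2 by auto
  have \<phi>pn: "\<And>e k. pnash G (fst (\<phi> e k)) (snd (\<phi> e k))" using \<phi>N unfolding NP_def by auto
  have \<sigma>A: "fst (\<sigma> h) \<in> A1 G \<and> snd (\<sigma> h) \<in> A2 G" for h
    using \<phi>N[of "hd h" "length h"] NPsub ab0 unfolding \<sigma>_def by auto
  have st1: "strat1 PP G s1" unfolding strat1_def s1_def avail1_def using \<sigma>A by auto
  have st2: "strat2 PP G s2" unfolding strat2_def s2_def avail2_def using \<sigma>A by auto
  have path1: "(\<Sum>j<2*m. U1 (\<phi> (a0, b0) (1 + j))) \<ge> real (2*m) * U1 L1 + real m * \<delta>1"
  proof -
    have "(\<Sum>j<2*m. U1 L1 + (if j < m then \<delta>1 else 0)) \<le> (\<Sum>j<2*m. U1 (\<phi> (a0, b0) (1 + j)))"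
    proof (intro sum_mono)
      fix j assume "j \<in> {..<2*m}"
      show "U1 L1 + (if j < m then \<delta>1 else 0) \<le> U1 (\<phi> (a0, b0) (1 + j))"
        using minL1[OF H2(1)] unfolding \<phi>_def \<delta>1_def by auto
    qed
    moreover have "(\<Sum>j<2*m. U1 L1 + (if j < m then \<delta>1 else 0)) = real (2*m) * U1 L1 + real m * \<delta>1"
      by (simp add: sum.distrib sum_if_half)
    ultimately show ?thesis by simp
  qed
  have path2: "(\<Sum>j<2*m. U2 (\<phi> (a0, b0) (1 + j))) \<ge> real (2*m) * U2 L2 + real m * \<delta>2"
  proof -
    have "(\<Sum>j<2*m. U2 L2 + \<delta>2 - (if j < m then \<delta>2 else 0)) \<le> (\<Sum>j<2*m. U2 (\<phi> (a0, b0) (1 + j)))"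
    proof (intro sum_mono)
      fix j assume "j \<in> {..<2*m}"
      show "U2 L2 + \<delta>2 - (if j < m then \<delta>2 else 0) \<le> U2 (\<phi> (a0, b0) (1 + j))"
        using minL2[OF H1(1)] unfolding \<phi>_def \<delta>2_def by auto
    qed
    moreover have "(\<Sum>j<2*m. U2 L2 + \<delta>2 - (if j < m then \<delta>2 else 0)) = real (2*m) * U2 L2 + real m * \<delta>2"
      using sum_if_half[of m "\<delta>2"] by (simp add: sum_subtractf sum.distrib algebra_simps)
    ultimately show ?thesis by simp
  qed
  have core: "\<forall>h. valid_hist G h \<and> length h < T \<longrightarrow>
        (\<forall>d1. strat1 PP G d1 \<longrightarrow> cont_val (u1 G) (T - length h) d1 s2 h \<le> cont_val (u1 G) (T - length h) s1 s2 h) \<and>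
        (\<forall>d2. strat2 PP G d2 \<longrightarrow> cont_val (u2 G) (T - length h) s1 d2 h \<le> cont_val (u2 G) (T - length h) s1 s2 h)"
  proof (rule allI, rule impI, rule conjI)
    fix h :: "('a\<times>'b) list" assume h: "valid_hist G h \<and> length h < T"
    show "\<forall>d1. strat1 PP G d1 \<longrightarrow> cont_val (u1 G) (T - length h) d1 s2 h \<le> cont_val (u1 G) (T - length h) s1 s2 h"
    proof (intro allI impI)
      fix d1 assume d1: "strat1 PP G d1"
      show "cont_val (u1 G) (T - length h) d1 s2 h \<le> cont_val (u1 G) (T - length h) s1 s2 h"
      proof (cases "h = []")
        case False
        thus ?thesis using cv_dev1[where \<sigma>=\<sigma> and \<phi>=\<phi>, OF \<sigma>\<phi> \<phi>pn d1 False] cv_path[where \<sigma>=\<sigma> and \<phi>=\<phi>, OF \<sigma>\<phi> False] h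
          unfolding s1_def s2_def by simp
      next
        case True
        obtain a where a: "d1 [] = return_pmf a" "a \<in> A1 G"
          using spec[OF d1[unfolded strat1_def], of "[]"] unfolding avail1_def valid_hist_def by auto
        have v: "valid_hist G [(a, b0)]" using a ab0 unfolding valid_hist_def by auto
        have "cont_val (u1 G) T d1 s2 [] = u1 G a b0 + cont_val (u1 G) (2*m) d1 s2 [(a, b0)]"
          unfolding T_def using a by (simp add: s2_def \<sigma>_def)
        also have "\<dots> \<le> u1 G a b0 + (\<Sum>j<2*m. U1 (\<phi> (a, b0) (1 + j)))"
          using cv_dev1[where \<sigma>=\<sigma> and \<phi>=\<phi>, OF \<sigma>\<phi> \<phi>pn d1 _ v, of "2*m"] unfolding s2_def U1_def by simp
        also have "\<dots> \<le> u1 G a0 b0 + (\<Sum>j<2*m. U1 (\<phi> (a0, b0) (1 + j)))"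
        proof (cases "a = a0")
          case True thus ?thesis by simp
        next
          case False
          hence "(\<Sum>j<2*m. U1 (\<phi> (a, b0) (1 + j))) = real (2*m) * U1 L1"
            unfolding \<phi>_def by simp
          thus ?thesis using path1 D1b[OF a(2)] m1 by linarith
        qed
        also have "\<dots> = cont_val (u1 G) T s1 s2 []"
          using cv_path[where \<sigma>=\<sigma> and \<phi>=\<phi>, OF \<sigma>\<phi>, of "[(a0,b0)]" "u1 G" "2*m"]
          unfolding T_def s1_def s2_def U1_def by (simp add: \<sigma>_def)
        finally show ?thesis using True by simp
      qed
    qed
    show "\<forall>d2. strat2 PP G d2 \<longrightarrow> cont_val (u2 G) (T - length h) s1 d2 h \<le> cont_val (u2 G) (T - length h) s1 s2 h"
    proof (intro allI impI)
      fix d2 assume d2: "strat2 PP G d2"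
      show "cont_val (u2 G) (T - length h) s1 d2 h \<le> cont_val (u2 G) (T - length h) s1 s2 h"
      proof (cases "h = []")
        case False
        thus ?thesis using cv_dev2[where \<sigma>=\<sigma> and \<phi>=\<phi>, OF \<sigma>\<phi> \<phi>pn d2 False] cv_path[where \<sigma>=\<sigma> and \<phi>=\<phi>, OF \<sigma>\<phi> False] h
          unfolding s1_def s2_def by simp
      next
        case True
        obtain b where b: "d2 [] = return_pmf b" "b \<in> A2 G"
          using spec[OF d2[unfolded strat2_def], of "[]"] unfolding avail2_def valid_hist_def by auto
        have v: "valid_hist G [(a0, b)]" using b ab0 unfolding valid_hist_def by auto
        have "cont_val (u2 G) T s1 d2 [] = u2 G a0 b + cont_val (u2 G) (2*m) s1 d2 [(a0, b)]"
          unfolding T_def using b by (simp add: s1_def \<sigma>_def)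
        also have "\<dots> \<le> u2 G a0 b + (\<Sum>j<2*m. U2 (\<phi> (a0, b) (1 + j)))"
          using cv_dev2[where \<sigma>=\<sigma> and \<phi>=\<phi>, OF \<sigma>\<phi> \<phi>pn d2 _ v, of "2*m"] unfolding s1_def U2_def by simp
        also have "\<dots> \<le> u2 G a0 b0 + (\<Sum>j<2*m. U2 (\<phi> (a0, b0) (1 + j)))"
        proof (cases "b = b0")
          case True thus ?thesis by simp
        next
          case False
          hence "(\<Sum>j<2*m. U2 (\<phi> (a0, b) (1 + j))) = real (2*m) * U2 L2"
            unfolding \<phi>_def by simp
          thus ?thesis using path2 D2b[OF b(2)] m2 by linarith
        qed
        also have "\<dots> = cont_val (u2 G) T s1 s2 []"
          using cv_path[where \<sigma>=\<sigma> and \<phi>=\<phi>, OF \<sigma>\<phi>, of "[(a0,b0)]" "u2 G" "2*m"]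
          unfolding T_def s1_def s2_def U2_def by (simp add: \<sigma>_def)
        finally show ?thesis using True by simp
      qed
    qed
  qed
  have spe: "SPE G T PP s1 s2" unfolding SPE_def using st1 st2 core by blast
  have ls: "locally_suboptimal G T PP s1 s2"
    unfolding locally_suboptimal_def
    by (rule exI[of _ "[]"]) (simp add: valid_hist_def T_def s1_def s2_def \<sigma>_def Nash_PP_ret ab0)
  show ?thesis unfolding in_G_LS_def using spe ls T_def by auto
qed

end
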